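(* In the bandit exponential-weights setting described in the context, $$\Gamma_2:=(e-2)\eta\,\mathbb{E}\left[\sum_{t=1}^n\mathbb{E}_{a\sim q_t}\left[\langle\hat w_t,\Phi_m(a)\rangle^2\,\Big|\,\mathcal{F}_{t-1}\right]\right]\le\frac{(e-2)\mathcal{G}^4\eta mn}{1-\gamma}.$$
   Context: $\mathcal{A}\subset\mathbb{R}^d$ finite; $\mathcal{K}$ a kernel with feature map $\Phi$ and the adversary plays $w_t=\Phi(y_t)$ with $|\mathcal{K}(a,y_t)|\le\mathcal{G}^2$ for all $a\in\mathcal{A}$. $\Phi_m:\mathbb{R}^d\to\mathbb{R}^m$ is a feature map. In round $t$, $q_t$ is a distribution on $\mathcal{A}$ (measurable w.r.t. the past), $\gamma\in(0,1)$, $\nu$ a distribution on $\mathcal{A}$, $p_t=\gamma\nu+(1-\gamma)q_t$, the player draws $a_t\sim p_t$, $\Sigma_m^{(t)}=\mathbb{E}_{x\sim p_t}[\Phi_m(x)\Phi_m(x)^\top]$ is assumed invertible, and $\hat w_t=\mathcal{K}(a_t,y_t)(\Sigma_m^{(t)})^{-1}\Phi_m(a_t)$. $\eta>0$, and $\mathcal{F}_{t-1}$ is the sigma field generated by the history up to the end of round $t-1$ (and the adversary's choice $y_t$). *)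

theory Defs
  imports "HOL-Analysis.Analysis" "HOL-Probability.Probability"
begin

definition mix_pmf :: "real \<Rightarrow> 'a pmf \<Rightarrow> 'a pmf \<Rightarrow> 'a pmf" where
  "mix_pmf g nu q = bind_pmf (bernoulli_pmf g) (\<lambda>b. if b then nu else q)"

definition play_pmf :: "real \<Rightarrow> 'a pmf \<Rightarrow> ('a list \<Rightarrow> 'a pmf) \<Rightarrow> 'a list \<Rightarrow> 'a pmf" where
  "play_pmf g nu q h = mix_pmf g nu (q h)"

primrec hist :: "real \<Rightarrow> 'a pmf \<Rightarrow> ('a list \<Rightarrow> 'a pmf) \<Rightarrow> nat \<Rightarrow> 'a list pmf" where
  "hist g nu q 0 = return_pmf []"
| "hist g nu q (Suc t) =
     bind_pmf (hist g nu q t) (\<lambda>h. map_pmf (\<lambda>a. h @ [a]) (play_pmf g nu q h))"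

definition second_moment :: "('x \<Rightarrow> real^'m) \<Rightarrow> 'x pmf \<Rightarrow> real^'m^'m" where
  "second_moment Phim p =
     (\<chi> i j. measure_pmf.expectation p (\<lambda>x. Phim x $ i * Phim x $ j))"

definition west :: "('x \<Rightarrow> 'x \<Rightarrow> real) \<Rightarrow> ('x \<Rightarrow> real^'m) \<Rightarrow> 'x pmf \<Rightarrow> 'x \<Rightarrow> 'x \<Rightarrow> real^'m" where
  "west K Phim p y a = K a y *\<^sub>R (matrix_inv (second_moment Phim p) *v Phim a)"

text \<open>Past sigma-field F_{t-1} on the space of full histories of length n:
  generated by the first t-1 actions (the adversary's y_t and q_t are functions of these).\<close>
definition past_algebra :: "'a list measure \<Rightarrow> nat \<Rightarrow> 'a list measure" where
  "past_algebra M t = vimage_algebra (space M) (take (t - 1)) (count_space UNIV)"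

end

theory Submission imports Defs begin

lemma mix_expect:
  fixes f :: "'a \<Rightarrow> real"
  assumes "finite (set_pmf nu)" "finite (set_pmf q)" "0 \<le> g" "g \<le> 1"
  shows "measure_pmf.expectation (mix_pmf g nu q) f
     = g * measure_pmf.expectation nu f + (1 - g) * measure_pmf.expectation q f"
  unfolding mix_pmf_def
  using assms by (subst pmf_expectation_bind[of UNIV]) (auto simp: UNIV_bool)

lemma set_mix: "set_pmf (mix_pmf g nu q) \<subseteq> set_pmf nu \<union> set_pmf q"
  unfolding mix_pmf_def by (auto split: if_splits)

lemma matrix_inv_props:
  assumes "invertible (S :: real^'n^'n)"
  shows "S ** matrix_inv S = mat 1" "matrix_inv S ** S = mat 1"
  using someI_ex[OF assms[unfolded invertible_def]] unfolding matrix_inv_def by auto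

lemma moment:
  fixes \<Phi>m :: "'x \<Rightarrow> real^'m"
  assumes "finite (set_pmf p)"
  shows "measure_pmf.expectation p (\<lambda>a. (u \<bullet> \<Phi>m a)\<^sup>2) = u \<bullet> (second_moment \<Phi>m p *v u)"
proof -
  have I: "integrable (measure_pmf p) f" for f :: "'x \<Rightarrow> real"
    using assms by (rule integrable_measure_pmf_finite)
  have "u \<bullet> (second_moment \<Phi>m p *v u) =
     (\<Sum>i\<in>UNIV. \<Sum>j\<in>UNIV. measure_pmf.expectation p (\<lambda>a. u$i * (\<Phi>m a $ i * \<Phi>m a $ j) * u$j))"
    by (simp add: inner_vec_def matrix_vector_mult_def second_moment_def sum_distrib_left mult_ac)
  also have "\<dots> = measure_pmf.expectation p (\<lambda>a. \<Sum>i\<in>UNIV. \<Sum>j\<in>UNIV. u$i * (\<Phi>m a $ i * \<Phi>m a $ j) * u$j)"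
    by (simp add: I integral_sum)
  also have "\<dots> = measure_pmf.expectation p (\<lambda>a. (u \<bullet> \<Phi>m a)\<^sup>2)"
    by (simp add: inner_vec_def power2_eq_square sum_product mult_ac)
  finally show ?thesis by simp
qed

lemma trace_lemma:
  fixes \<Phi>m :: "'x \<Rightarrow> real^'m"
  assumes "finite (set_pmf p)" "invertible (second_moment \<Phi>m p)"
  shows "measure_pmf.expectation p (\<lambda>a. (matrix_inv (second_moment \<Phi>m p) *v \<Phi>m a) \<bullet> \<Phi>m a) = real CARD('m)"
proof -
  let ?S = "second_moment \<Phi>m p" let ?B = "matrix_inv ?S"
  have I: "integrable (measure_pmf p) f" for f :: "'x \<Rightarrow> real"
    using assms(1) by (rule integrable_measure_pmf_finite)
  have "measure_pmf.expectation p (\<lambda>a. (?B *v \<Phi>m a) \<bullet> \<Phi>m a)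
     = measure_pmf.expectation p (\<lambda>a. \<Sum>i\<in>UNIV. \<Sum>j\<in>UNIV. ?B$i$j * (\<Phi>m a $ j * \<Phi>m a $ i))"
    by (simp add: inner_vec_def matrix_vector_mult_def sum_distrib_left sum_distrib_right mult_ac)
  also have "\<dots> = (\<Sum>i\<in>UNIV. \<Sum>j\<in>UNIV. ?B$i$j * ?S$j$i)"
    by (simp add: I integral_sum second_moment_def)
  also have "\<dots> = (\<Sum>i\<in>UNIV. (?B ** ?S)$i$i)"
    by (simp add: matrix_matrix_mult_def)
  also have "\<dots> = real CARD('m)"
    using matrix_inv_props(2)[OF assms(2)] by (simp add: mat_def)
  finally show ?thesis .
qed

lemma step:
  fixes \<Phi>m :: "'x \<Rightarrow> real^'m" and K :: "'x \<Rightarrow> 'x \<Rightarrow> real"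
  assumes finA: "finite A" and sq: "set_pmf q0 \<subseteq> A" and snu: "set_pmf nu0 \<subseteq> A"
    and g: "0 < \<gamma>" "\<gamma> < 1"
    and bnd: "\<And>a. a \<in> A \<Longrightarrow> \<bar>K a yv\<bar> \<le> G\<^sup>2"
    and inv: "invertible (second_moment \<Phi>m (mix_pmf \<gamma> nu0 q0))"
  shows "measure_pmf.expectation (mix_pmf \<gamma> nu0 q0) (\<lambda>act. measure_pmf.expectation q0
            (\<lambda>a. (west K \<Phi>m (mix_pmf \<gamma> nu0 q0) yv act \<bullet> \<Phi>m a)\<^sup>2))
         \<le> G ^ 4 * real CARD('m) / (1 - \<gamma>)"
proof -
  define p where "p = mix_pmf \<gamma> nu0 q0"
  define S where "S = second_moment \<Phi>m p"
  define B where "B = matrix_inv S"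
  have finq: "finite (set_pmf q0)" using finA sq finite_subset by blast
  have finnu: "finite (set_pmf nu0)" using finA snu finite_subset by blast
  have sp: "set_pmf p \<subseteq> A" using set_mix[of \<gamma> nu0 q0] sq snu unfolding p_def by blast
  have finp: "finite (set_pmf p)" using finA sp finite_subset by blast
  have invS: "invertible S" using inv unfolding S_def p_def .
  have SB: "S *v (B *v v) = v" for v
    using matrix_inv_props(1)[OF invS] by (simp add: B_def matrix_vector_mul_assoc)
  have quad: "measure_pmf.expectation p (\<lambda>a. (u \<bullet> \<Phi>m a)\<^sup>2) = u \<bullet> (S *v u)" for u
    using moment[OF finp] unfolding S_def by blast
  define f where "f act = (\<lambda>a. (west K \<Phi>m p yv act \<bullet> \<Phi>m a)\<^sup>2)" for act
  have key: "measure_pmf.expectation p (f act) = (K act yv)\<^sup>2 * ((B *v \<Phi>m act) \<bullet> \<Phi>m act)" for act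
    unfolding f_def quad west_def S_def[symmetric] B_def[symmetric]
    by (simp add: matrix_vector_mult_scaleR SB power2_eq_square inner_commute)
  have nonneg: "0 \<le> (B *v \<Phi>m act) \<bullet> \<Phi>m act" for act
  proof -
    have "(B *v \<Phi>m act) \<bullet> \<Phi>m act = measure_pmf.expectation p (\<lambda>a. ((B *v \<Phi>m act) \<bullet> \<Phi>m a)\<^sup>2)"
      by (simp add: quad SB)
    also have "\<dots> \<ge> 0" by simp
    finally show ?thesis by simp
  qed
  have qle: "measure_pmf.expectation q0 (f act) \<le> measure_pmf.expectation p (f act) / (1 - \<gamma>)" for act
  proof -
    have "measure_pmf.expectation p (f act) = \<gamma> * measure_pmf.expectation nu0 (f act) + (1 - \<gamma>) * measure_pmf.expectation q0 (f act)"
      unfolding p_def using finnu finq g by (intro mix_expect) auto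
    moreover have "measure_pmf.expectation nu0 (f act) \<ge> 0" unfolding f_def by simp
    ultimately show ?thesis using g by (simp add: field_simps)
  qed
  have KG: "(K act yv)\<^sup>2 \<le> G ^ 4" if "act \<in> A" for act
  proof -
    have "\<bar>K act yv\<bar>\<^sup>2 \<le> (G\<^sup>2)\<^sup>2" using bnd[OF that] by (intro power_mono) auto
    then show ?thesis by simp
  qed
  have pw: "measure_pmf.expectation q0 (f act) \<le> G ^ 4 / (1 - \<gamma>) * ((B *v \<Phi>m act) \<bullet> \<Phi>m act)"
    if "act \<in> A" for act
  proof -
    have "measure_pmf.expectation q0 (f act) \<le> (K act yv)\<^sup>2 * ((B *v \<Phi>m act) \<bullet> \<Phi>m act) / (1 - \<gamma>)"
      using qle[of act] key[of act] by simp
    also have "\<dots> \<le> G ^ 4 * ((B *v \<Phi>m act) \<bullet> \<Phi>m act) / (1 - \<gamma>)"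
      using g KG[OF that] nonneg[of act] by (intro divide_right_mono mult_right_mono) auto
    finally show ?thesis by simp
  qed
  have "measure_pmf.expectation p (\<lambda>act. measure_pmf.expectation q0 (f act))
      \<le> measure_pmf.expectation p (\<lambda>act. G ^ 4 / (1 - \<gamma>) * ((B *v \<Phi>m act) \<bullet> \<Phi>m act))"
    using finp sp pw
    by (intro integral_mono_AE integrable_measure_pmf_finite) (auto simp: AE_measure_pmf_iff)
  also have "\<dots> = G ^ 4 / (1 - \<gamma>) * real CARD('m)"
    using trace_lemma[OF finp, of \<Phi>m] invS unfolding B_def S_def by simp
  finally show ?thesis unfolding f_def p_def by simp
qed

lemma hist_len: "set_pmf (hist g nu q k) \<subseteq> {xs. length xs = k}"
  by (induction k) auto

lemma hist_set:
  assumes "\<And>h. set_pmf (play_pmf g nu q h) \<subseteq> A"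
  shows "set_pmf (hist g nu q k) \<subseteq> {xs. set xs \<subseteq> A \<and> length xs = k}"
  using assms by (induction k) fastforce+

lemma hist_take:
  "j \<le> k \<Longrightarrow> map_pmf (take j) (hist g nu q k) = hist g nu q j"
proof (induction k)
  case 0
  then show ?case by simp
next
  case (Suc k)
  show ?case
  proof (cases "j = Suc k")
    case True
    have "map_pmf (take j) (hist g nu q (Suc k)) = map_pmf id (hist g nu q (Suc k))"
      using hist_len[of g nu q "Suc k"] hist_len[of g nu q k] True by (intro map_pmf_cong) auto
    then show ?thesis using True by simp
  next
    case False
    then have jk: "j \<le> k" using Suc.prems by simp
    have "map_pmf (take j) (hist g nu q (Suc k)) =
       bind_pmf (hist g nu q k) (\<lambda>h. map_pmf (\<lambda>a. take j (h @ [a])) (play_pmf g nu q h))"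
      by (simp add: map_bind_pmf pmf.map_comp o_def)
    also have "\<dots> = bind_pmf (hist g nu q k) (\<lambda>h. map_pmf (\<lambda>a. take j h) (play_pmf g nu q h))"
      using hist_len[of g nu q k] jk by (intro bind_pmf_cong refl map_pmf_cong) auto
    also have "\<dots> = map_pmf (take j) (hist g nu q k)"
      by (simp add: map_pmf_def)
    also have "\<dots> = hist g nu q j" using Suc.IH jk by simp
    finally show ?thesis .
  qed
qed

theorem lemma5:
  fixes A :: "(real^'d) set"
    and K :: "real^'d \<Rightarrow> real^'d \<Rightarrow> real"
    and \<Phi> :: "real^'d \<Rightarrow> 'h::real_inner"
    and \<Phi>m :: "real^'d \<Rightarrow> real^'m"
    and y :: "(real^'d) list \<Rightarrow> real^'d"
    and q :: "(real^'d) list \<Rightarrow> (real^'d) pmf"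
    and \<nu> :: "(real^'d) pmf"
    and \<gamma> \<eta> G :: real and n :: nat
  assumes "finite A"
    and kernel: "\<And>x z. K x z = \<Phi> x \<bullet> \<Phi> z"
    and bounded: "\<And>h a. a \<in> A \<Longrightarrow> \<bar>K a (y h)\<bar> \<le> G\<^sup>2"
    and q_supp: "\<And>h. set_pmf (q h) \<subseteq> A"
    and nu_supp: "set_pmf \<nu> \<subseteq> A"
    and gamma: "0 < \<gamma>" "\<gamma> < 1"
    and eta: "\<eta> > 0"
    and inv: "\<And>h. invertible (second_moment \<Phi>m (play_pmf \<gamma> \<nu> q h))"
  shows "(exp 1 - 2) * \<eta> *
      measure_pmf.expectation (hist \<gamma> \<nu> q n)
        (\<lambda>h. \<Sum>t\<in>{1..n}.
           real_cond_exp (measure_pmf (hist \<gamma> \<nu> q n))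
             (past_algebra (measure_pmf (hist \<gamma> \<nu> q n)) t)
             (\<lambda>h'. let past = take (t - 1) h'; act = h' ! (t - 1) in
                measure_pmf.expectation (q past)
                  (\<lambda>a. (west K \<Phi>m (play_pmf \<gamma> \<nu> q past) (y past) act \<bullet> \<Phi>m a)\<^sup>2)) h)
    \<le> (exp 1 - 2) * G ^ 4 * \<eta> * real CARD('m) * real n / (1 - \<gamma>)"
proof -
  let ?M = "hist \<gamma> \<nu> q n"
  define fh where "fh t = (\<lambda>h'. let past = take (t - 1) h'; act = h' ! (t - 1) in
                measure_pmf.expectation (q past)
                  (\<lambda>a. (west K \<Phi>m (play_pmf \<gamma> \<nu> q past) (y past) act \<bullet> \<Phi>m a)\<^sup>2))" for t
  define C where "C = G ^ 4 * real CARD('m) / (1 - \<gamma>)"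
  have splay: "set_pmf (play_pmf \<gamma> \<nu> q h) \<subseteq> A" for h
    using set_mix[of \<gamma> \<nu> "q h"] q_supp nu_supp unfolding play_pmf_def by blast
  have finplay: "finite (set_pmf (play_pmf \<gamma> \<nu> q h))" for h
    using splay \<open>finite A\<close> finite_subset by blast
  have finhist: "finite (set_pmf (hist \<gamma> \<nu> q k))" for k
    by (rule finite_subset[OF hist_set[OF splay]]) (simp add: finite_lists_length_eq \<open>finite A\<close>)
  have integ: "integrable (measure_pmf ?M) f" for f :: "_ \<Rightarrow> real"
    by (rule integrable_measure_pmf_finite[OF finhist])
  have ce: "measure_pmf.expectation ?M (real_cond_exp (measure_pmf ?M) (past_algebra (measure_pmf ?M) t) (fh t))
        = measure_pmf.expectation ?M (fh t)" for t
  proof -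
    have "finite_measure_subalgebra (measure_pmf ?M) (past_algebra (measure_pmf ?M) t)"
      unfolding finite_measure_subalgebra_def finite_measure_subalgebra_axioms_def subalgebra_def
      by (auto simp: past_algebra_def intro: prob_space.finite_measure prob_space_measure_pmf)
    then have "sigma_finite_subalgebra (measure_pmf ?M) (past_algebra (measure_pmf ?M) t)"
      by (rule finite_measure_subalgebra_is_sigma_finite)
    then show ?thesis
      by (rule sigma_finite_subalgebra.real_cond_exp_int(2)[OF _ integ])
  qed
  have bound: "measure_pmf.expectation ?M (fh t) \<le> C" if t: "t \<in> {1..n}" for t
  proof -
    obtain k where tk: "t = Suc k" using t by (cases t) auto
    have "measure_pmf.expectation ?M (fh t) = measure_pmf.expectation ?M (\<lambda>h. fh t (take t h))"
      using hist_len[of \<gamma> \<nu> q n] t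
      by (intro integral_cong_AE) (auto simp: AE_measure_pmf_iff fh_def Let_def tk min_def)
    also have "\<dots> = measure_pmf.expectation (map_pmf (take t) ?M) (fh t)" by simp
    also have "\<dots> = measure_pmf.expectation (hist \<gamma> \<nu> q (Suc k)) (fh t)"
      using hist_take[of t n \<gamma> \<nu> q] t tk by simp
    also have "\<dots> = (\<Sum>xs\<in>set_pmf (hist \<gamma> \<nu> q k). pmf (hist \<gamma> \<nu> q k) xs *
        measure_pmf.expectation (map_pmf (\<lambda>a. xs @ [a]) (play_pmf \<gamma> \<nu> q xs)) (fh t))"
      using finhist[of k] finplay
      by (simp only: hist.simps, subst pmf_expectation_bind[of "set_pmf (hist \<gamma> \<nu> q k)"])
        auto
    also have "\<dots> \<le> (\<Sum>xs\<in>set_pmf (hist \<gamma> \<nu> q k). pmf (hist \<gamma> \<nu> q k) xs * C)"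
    proof (rule sum_mono, rule mult_left_mono)
      fix xs assume xs: "xs \<in> set_pmf (hist \<gamma> \<nu> q k)"
      then have lx: "length xs = k" using hist_len by blast
      have "measure_pmf.expectation (map_pmf (\<lambda>a. xs @ [a]) (play_pmf \<gamma> \<nu> q xs)) (fh t)
         = measure_pmf.expectation (mix_pmf \<gamma> \<nu> (q xs)) (\<lambda>act. measure_pmf.expectation (q xs)
            (\<lambda>a. (west K \<Phi>m (mix_pmf \<gamma> \<nu> (q xs)) (y xs) act \<bullet> \<Phi>m a)\<^sup>2))"
        using lx by (simp add: fh_def Let_def tk play_pmf_def nth_append)
      also have "\<dots> \<le> C" unfolding C_def
        using inv[of xs] gamma bounded q_supp nu_supp \<open>finite A\<close>
        by (intro step[where A=A]) (auto simp: play_pmf_def)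
      finally show "measure_pmf.expectation (map_pmf (\<lambda>a. xs @ [a]) (play_pmf \<gamma> \<nu> q xs)) (fh t) \<le> C" .
    qed simp
    also have "\<dots> = C"
      using sum_pmf_eq_1[OF finhist[of k] order_refl] by (simp add: sum_distrib_right[symmetric])
    finally show ?thesis .
  qed
  have "measure_pmf.expectation ?M
        (\<lambda>h. \<Sum>t\<in>{1..n}. real_cond_exp (measure_pmf ?M) (past_algebra (measure_pmf ?M) t) (fh t) h)
      = (\<Sum>t\<in>{1..n}. measure_pmf.expectation ?M (fh t))"
    by (simp add: integral_sum integ ce)
  also have "\<dots> \<le> (\<Sum>t\<in>{1..n}. C)" by (rule sum_mono[OF bound])
  also have "\<dots> = real n * C" by simp
  finally have main: "measure_pmf.expectation ?M
        (\<lambda>h. \<Sum>t\<in>{1..n}. real_cond_exp (measure_pmf ?M) (past_algebra (measure_pmf ?M) t) (fh t) h)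
      \<le> real n * C" .
  have e2: "0 \<le> exp 1 - (2::real)" using exp_ge_add_one_self[of 1] by simp
  have "(exp 1 - 2) * \<eta> * measure_pmf.expectation ?M
        (\<lambda>h. \<Sum>t\<in>{1..n}. real_cond_exp (measure_pmf ?M) (past_algebra (measure_pmf ?M) t) (fh t) h)
      \<le> (exp 1 - 2) * \<eta> * (real n * C)"
    using e2 eta main by (intro mult_left_mono) auto
  also have "\<dots> = (exp 1 - 2) * G ^ 4 * \<eta> * real CARD('m) * real n / (1 - \<gamma>)"
    unfolding C_def by (simp add: field_simps)
  finally show ?thesis unfolding fh_def .
qed

end
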